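(* Let $n\ge2$, $\pi\in\mathrm{Eq}(\mathsf{D}_n)$, and let $\mathbf{u}\approx\mathbf{v}$ be an identity satisfied by $\mathbf{C}_n\{\mathsf{Id}(\pi)\}$. (i) If $\mathbf{u}$ is a $(2n-1)$-limited cube-free rigid word, then $\mathbf{v}$ is also a $(2n-1)$-limited cube-free rigid word. (ii) If $\mathbf{u}\in\mathsf{D}_n$, then $\mathbf{v}\in\mathsf{D}_n$ and $(\mathbf{u},\mathbf{v})\in\pi$.
   Context: All varieties are varieties of monoids (signature: associative binary operation and identity constant $1$). Words are elements of the free monoid $X^*$ over a countably infinite set $X$ of variables; identities are pairs of words, and variables may be substituted by $1$. $\mathbf{V}\Sigma$ is the subvariety of $\mathbf{V}$ defined by $\Sigma$. $\mathbf{O}$ is the variety defined by $xyt_1xt_2y \approx yxt_1xt_2y$, $xt_1xyt_2y \approx xt_1yxt_2y$, $xt_1yt_2xy \approx xt_1yt_2yx$. For $n\ge2$, $\mathbf{C}_n=\mathbf{O}\{x^4\approx x^3,\ x^3t\approx tx^3,\ x^{2n}t_1\cdots t_{2n}\approx t_1x\cdots t_{2n}x\}$. For $0\le j\le n-1$, $\mathbf{d}_j = x^{a_0}t_1x^{a_1}\cdots t_{n-1}x^{a_{n-1}}$ with $a_j=1$, $a_i=2$ for $i\ne j$; $\mathsf{D}_n=\{\mathbf{d}_0,\dots,\mathbf{d}_{n-1}\}$. $\mathrm{Eq}(\mathsf{W})$ is the lattice of equivalence relations on $\mathsf{W}$ and $\mathsf{Id}(\pi)=\{\mathbf{u}\approx\mathbf{v}:(\mathbf{u},\mathbf{v})\in\pi\}$.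 A rigid word is $x^{e_0}t_1x^{e_1}\cdots t_rx^{e_r}$ with $r\ge0$, $e_i\ge0$, $x,t_1,\ldots,t_r$ distinct variables; it is $k$-limited if $\sum e_i\le k$ and cube-free if all $e_i<3$. *)

theory Defs
  imports "HOL-Algebra.Group"
begin

type_synonym word = "nat list"
type_synonym identity = "word \<times> word"

text \<open>Value of a word in a monoid under an assignment of the variables.
  Assignments may send variables to the identity element.\<close>
definition eval_word :: "('a, 'b) monoid_scheme \<Rightarrow> (nat \<Rightarrow> 'a) \<Rightarrow> word \<Rightarrow> 'a" where
  "eval_word M h w = foldr (\<lambda>x a. h x \<otimes>\<^bsub>M\<^esub> a) w \<one>\<^bsub>M\<^esub>"

definition sat_id :: "('a, 'b) monoid_scheme \<Rightarrow> identity \<Rightarrow> bool" where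
  "sat_id M p \<longleftrightarrow> (\<forall>h. (\<forall>x. h x \<in> carrier M) \<longrightarrow> eval_word M h (fst p) = eval_word M h (snd p))"

definition in_variety :: "identity set \<Rightarrow> ('a, 'b) monoid_scheme \<Rightarrow> bool" where
  "in_variety \<Sigma> M \<longleftrightarrow> monoid M \<and> (\<forall>p\<in>\<Sigma>. sat_id M p)"

text \<open>Monoids are taken
  with carrier inside the countably infinite type nat; this suffices since the
  relatively free monoid of countable rank of any variety is countable.\<close>
definition variety_satisfies :: "identity set \<Rightarrow> identity \<Rightarrow> bool" where
  "variety_satisfies \<Sigma> p \<longleftrightarrow> (\<forall>M :: nat monoid. in_variety \<Sigma> M \<longrightarrow> sat_id M p)"

text \<open>Identities defining O (x = 0, y = 1, t1 = 2, t2 = 3).\<close>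
definition O_ids :: "identity set" where
  "O_ids = { ([0,1,2,0,3,1], [1,0,2,0,3,1]),
             ([0,2,0,1,3,1], [0,2,1,0,3,1]),
             ([0,2,1,3,0,1], [0,2,1,3,1,0]) }"

text \<open>Identities defining C_n within O (x = 0, t = 1, t_i = i).\<close>
definition C_ids :: "nat \<Rightarrow> identity set" where
  "C_ids n = O_ids \<union>
     { (replicate 4 0, replicate 3 0),
       (replicate 3 0 @ [1], [1] @ replicate 3 0),
       (replicate (2*n) 0 @ [1..<2*n+1], concat (map (\<lambda>i. [i, 0]) [1..<2*n+1])) }"

text \<open>d_j = x^{a_0} t_1 x^{a_1} ... t_{n-1} x^{a_{n-1}}, with x = 0, t_i = i,
  a_j = 1 and a_i = 2 otherwise.\<close>
definition d_word :: "nat \<Rightarrow> nat \<Rightarrow> word" where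
  "d_word n j = concat (map (\<lambda>i. (if i = 0 then [] else [i]) @ replicate (if i = j then 1 else 2) 0) [0..<n])"

definition D_set :: "nat \<Rightarrow> word set" where
  "D_set n = {d_word n j | j. j < n}"

definition Id_of :: "(word \<times> word) set \<Rightarrow> identity set" where
  "Id_of \<pi> = {(u, v). (u, v) \<in> \<pi>}"

text \<open>Rigid word x^{e_0} t_1 x^{e_1} ... t_r x^{e_r}.\<close>
definition rigid_form :: "nat \<Rightarrow> nat list \<Rightarrow> nat list \<Rightarrow> word" where
  "rigid_form x ts es = replicate (es ! 0) x @
     concat (map (\<lambda>i. ts ! i # replicate (es ! Suc i) x) [0..<length ts])"

definition limited_cubefree_rigid :: "nat \<Rightarrow> word \<Rightarrow> bool" where
  "limited_cubefree_rigid k w \<longleftrightarrow>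
     (\<exists>x ts es. distinct (x # ts) \<and> length es = Suc (length ts) \<and>
        w = rigid_form x ts es \<and> sum_list es \<le> k \<and> (\<forall>e\<in>set es. e < 3))"

end

theory Submission
  imports Defs "HOL-Library.Countable"
begin

fun runs :: "nat \<Rightarrow> word \<Rightarrow> nat list" where
  "runs x [] = [0]"
| "runs x (a # w) = (if a = x then Suc (hd (runs x w)) # tl (runs x w) else 0 # runs x w)"

fun rf :: "nat \<Rightarrow> nat list \<Rightarrow> nat list \<Rightarrow> word" where
  "rf x [] es = replicate (hd es) x"
| "rf x (t # ts) es = replicate (hd es) x @ t # rf x ts (tl es)"

lemma runs_ne[simp]: "runs x w \<noteq> []"
  by (induction w) auto

lemma runs_length: "length (runs x w) = Suc (length (filter (\<lambda>y. y \<noteq> x) w))"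
  by (induction w) (auto simp: runs_ne)

lemma rf_Suc: "rf x ts (Suc h # t) = x # rf x ts (h # t)"
  by (cases ts) auto

lemma rf_runs: "rf x (filter (\<lambda>y. y \<noteq> x) w) (runs x w) = w"
proof (induction w)
  case Nil then show ?case by simp
next
  case (Cons a w)
  show ?case
  proof (cases "a = x")
    case True
    then show ?thesis using Cons rf_Suc[of x "filter (\<lambda>y. y \<noteq> x) w" "hd (runs x w)" "tl (runs x w)"]
      by (simp add: runs_ne)
  next
    case False then show ?thesis using Cons by simp
  qed
qed

lemma runs_sum: "sum_list (runs x w) = count_list w x"
proof (induction w)
  case (Cons a w)
  then show ?case
    by (cases "runs x w") (auto)
qed simp

lemma runs_append:
  "runs x (a @ b) = butlast (runs x a) @ (last (runs x a) + hd (runs x b)) # tl (runs x b)"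
proof (induction a)
  case Nil then show ?case by (cases "runs x b") auto
next
  case (Cons c a)
  show ?case
  proof (cases "c = x")
    case True
    obtain e rs where ra: "runs x a = e # rs" by (cases "runs x a") auto
    show ?thesis using Cons True ra by (cases rs) auto
  next
    case False
    then show ?thesis using Cons by (cases "runs x a") auto
  qed
qed

lemma runs_app_free: "x \<notin> set b \<Longrightarrow> runs x (a @ b) = runs x a @ replicate (length b) 0"
proof (induction a)
  case Nil then show ?case by (induction b) auto
next
  case (Cons c a) then show ?case by (cases "runs x a") auto
qed

lemma runs_free_app: "x \<notin> set b \<Longrightarrow> runs x (b @ a) = replicate (length b) 0 @ runs x a"
  by (induction b) auto

lemma runs_rep: "runs x (replicate m x @ w) = (m + hd (runs x w)) # tl (runs x w)"
  by (induction m) auto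

lemma runs_rf: "x \<notin> set ts \<Longrightarrow> length es = Suc (length ts) \<Longrightarrow> runs x (rf x ts es) = es"
proof (induction ts arbitrary: es)
  case Nil then show ?case using runs_rep[of x "hd es" "[]"] by (cases es) auto
next
  case (Cons t ts)
  then obtain e es' where es: "es = e # es'" by (cases es) auto
  show ?case using Cons es runs_rep[of x e "t # rf x ts es'"] by simp
qed

lemma filter_rf: "x \<notin> set ts \<Longrightarrow> filter (\<lambda>y. y \<noteq> x) (rf x ts es) = ts"
  by (induction ts arbitrary: es) auto

lemma rigid_form_rf: "length es = Suc (length ts) \<Longrightarrow> rigid_form x ts es = rf x ts es"
proof (induction ts arbitrary: es)
  case Nil then show ?case by (cases es) (auto simp: rigid_form_def)
next
  case (Cons t ts)
  then obtain e es' where es: "es = e # es'" by (cases es) auto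
  have "rigid_form x ts es' = rf x ts es'" using Cons es by simp
  then show ?case using es
    by (simp add: rigid_form_def map_upt_Suc del: upt_Suc)
qed


definition inW :: "nat \<Rightarrow> word \<Rightarrow> bool" where
  "inW n w \<longleftrightarrow> (\<exists>x. count_list w x \<le> 2*n-1 \<and> distinct (filter (\<lambda>y. y \<noteq> x) w)
                 \<and> (\<forall>e\<in>set (runs x w). e < 3))"

lemma distinct_count_le1: "distinct xs \<Longrightarrow> count_list xs a \<le> 1"
  by (induction xs) auto

lemma count_filter_ne: "a \<noteq> x \<Longrightarrow> count_list (filter (\<lambda>y. y \<noteq> x) w) a = count_list w a"
  by (induction w) auto

lemma twice:
  assumes "distinct (filter (\<lambda>y. y \<noteq> x) w)" "count_list w a \<ge> 2"
  shows "a = x"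
  proof (rule ccontr)
  assume "a \<noteq> x"
  then have "count_list (filter (\<lambda>y. y \<noteq> x) w) a = count_list w a" by (rule count_filter_ne)
  moreover have "count_list (filter (\<lambda>y. y \<noteq> x) w) a \<le> 1" using assms(1) by (rule distinct_count_le1)
  ultimately show False using assms(2) by simp
qed

lemma runs_factor:
  assumes "\<forall>e\<in>set (runs x (a @ b)). e < 3"
  shows "\<forall>e\<in>set (runs x a). e < 3" "\<forall>e\<in>set (runs x b). e < 3"
proof -
  have R: "runs x (a @ b) = butlast (runs x a) @ (last (runs x a) + hd (runs x b)) # tl (runs x b)"
    by (rule runs_append)
  show "\<forall>e\<in>set (runs x a). e < 3"
  proof
    fix e assume e: "e \<in> set (runs x a)"
    obtain bs l where bl: "runs x a = bs @ [l]" by (metis append_butlast_last_id runs_ne)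
    then have "e \<in> set (butlast (runs x a)) \<or> e = last (runs x a)" using e by auto
    then show "e < 3" using assms R by (auto)
  qed
  show "\<forall>e\<in>set (runs x b). e < 3"
  proof
    fix e assume e: "e \<in> set (runs x b)"
    obtain h t where "runs x b = h # t" by (cases "runs x b") auto
    then have "e \<in> set (tl (runs x b)) \<or> e = hd (runs x b)" using e by auto
    then show "e < 3" using assms R by (auto)
  qed
qed

lemma inW_factor: assumes "inW n (a @ b)" shows "inW n a" "inW n b"
proof -
  obtain x where x: "count_list (a@b) x \<le> 2*n-1" "distinct (filter (\<lambda>y. y \<noteq> x) (a@b))"
     "\<forall>e\<in>set (runs x (a@b)). e < 3" using assms unfolding inW_def by blast
  show "inW n a" unfolding inW_def using x runs_factor(1)[OF x(3)] by (intro exI[of _ x]) auto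
  show "inW n b" unfolding inW_def using x runs_factor(2)[OF x(3)] by (intro exI[of _ x]) auto
qed

lemma inW_factor3: "inW n (a @ b @ c) \<Longrightarrow> inW n b"
  using inW_factor by blast

lemma runs_replicate: "runs x (replicate m x) = [m]"
  using runs_rep[of x m "[]"] by simp

lemma not_inW_rep3: "m \<ge> 3 \<Longrightarrow> \<not> inW n (replicate m y)"
proof
  assume m: "m \<ge> 3" and w: "inW n (replicate m y)"
  then obtain x where x: "distinct (filter (\<lambda>z. z \<noteq> x) (replicate m y))"
     "\<forall>e\<in>set (runs x (replicate m y)). e < 3" unfolding inW_def by blast
  show False
  proof (cases "x = y")
    case True then show ?thesis using x m runs_replicate[of y m] by auto
  next
    case False
    then have "filter (\<lambda>z. z \<noteq> x) (replicate m y) = replicate m y" by (induction m) auto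
    then show ?thesis using x m by (cases m) auto
  qed
qed

lemma all_x_rep: "(\<forall>a\<in>set p. a = x) \<Longrightarrow> p = replicate (length p) x"
  using replicate_length_same by metis

lemma count_concat_rep: "count_list (concat (replicate m p)) a = m * count_list p a"
  by (induction m) auto

lemma concat_rep_rep: "concat (replicate m (replicate k x)) = replicate (m*k) x"
  by (induction m) (auto simp: replicate_add)

lemma cube_empty:
  assumes "inW n (concat (replicate m p))" "m \<ge> 3"
  shows "p = []"
proof (rule ccontr)
  assume ne: "p \<noteq> []"
  obtain x where x: "distinct (filter (\<lambda>z. z \<noteq> x) (concat (replicate m p)))"
    using assms(1) unfolding inW_def by auto
  have "\<forall>a\<in>set p. a = x"
  proof
    fix a assume a: "a \<in> set p"
    have "count_list p a \<noteq> 0" using a count_list_0_iff[of p a] by blast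
    then have c1: "1 \<le> count_list p a" by linarith
    have "3 * 1 \<le> m * count_list p a" by (rule mult_le_mono[OF assms(2) c1])
    then have "count_list (concat (replicate m p)) a \<ge> 2" using count_concat_rep[of m p a] by linarith
    then show "a = x" by (rule twice[OF x])
  qed
  then have p: "p = replicate (length p) x" by (rule all_x_rep)
  have "concat (replicate m p) = replicate (m * length p) x"
  proof -
    have "concat (replicate m p) = concat (replicate m (replicate (length p) x))"
      using arg_cong[OF p, of "\<lambda>q. concat (replicate m q)"] .
    also have "\<dots> = replicate (m * length p) x" by (rule concat_rep_rep)
    finally show ?thesis .
  qed
  have l1: "1 \<le> length p" using ne by (cases p) auto
  have "3 * 1 \<le> m * length p" by (rule mult_le_mono[OF assms(2) l1])
  moreover have "concat (replicate m p) = replicate (m * length p) x" by fact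
  ultimately show False using assms(1) not_inW_rep3[of "m * length p" n x] by simp
qed


definition sub :: "(nat \<Rightarrow> word) \<Rightarrow> word \<Rightarrow> word" where
  "sub \<sigma> w = concat (map \<sigma> w)"

definition repr :: "(word \<Rightarrow> nat) \<Rightarrow> nat \<Rightarrow> word" where
  "repr V a = (SOME w. V w = a)"

definition mkM :: "(word \<Rightarrow> nat) \<Rightarrow> nat monoid" where
  "mkM V = \<lparr>carrier = range V, mult = (\<lambda>a b. V (repr V a @ repr V b)), one = V []\<rparr>"

definition congV :: "(word \<Rightarrow> nat) \<Rightarrow> bool" where
  "congV V \<longleftrightarrow> (\<forall>w1 w1' w2. V w1 = V w1' \<longrightarrow> V (w1 @ w2) = V (w1' @ w2) \<and> V (w2 @ w1) = V (w2 @ w1'))"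

lemma repr_V: "V (repr V (V a)) = V a"
  unfolding repr_def by (rule someI_ex) blast

lemma mult_V: assumes "congV V" shows "V a \<otimes>\<^bsub>mkM V\<^esub> V b = V (a @ b)"
proof -
  have "V a \<otimes>\<^bsub>mkM V\<^esub> V b = V (repr V (V a) @ repr V (V b))" by (simp add: mkM_def)
  also have "\<dots> = V (a @ repr V (V b))" using assms repr_V[of V a] unfolding congV_def by blast
  also have "\<dots> = V (a @ b)" using assms repr_V[of V b] unfolding congV_def by blast
  finally show ?thesis .
qed

lemma monoid_mkM: assumes "congV V" shows "monoid (mkM V)"
proof (rule monoidI)
  fix x y assume "x \<in> carrier (mkM V)" "y \<in> carrier (mkM V)"
  then show "x \<otimes>\<^bsub>mkM V\<^esub> y \<in> carrier (mkM V)" by (auto simp: mkM_def)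
next
  show "\<one>\<^bsub>mkM V\<^esub> \<in> carrier (mkM V)" by (auto simp: mkM_def)
next
  fix x y z assume "x \<in> carrier (mkM V)" "y \<in> carrier (mkM V)" "z \<in> carrier (mkM V)"
  then obtain a b c where "x = V a" "y = V b" "z = V c" by (auto simp: mkM_def)
  then show "x \<otimes>\<^bsub>mkM V\<^esub> y \<otimes>\<^bsub>mkM V\<^esub> z = x \<otimes>\<^bsub>mkM V\<^esub> (y \<otimes>\<^bsub>mkM V\<^esub> z)"
    using mult_V[OF assms] by simp
next
  fix x assume "x \<in> carrier (mkM V)"
  then obtain a where "x = V a" by (auto simp: mkM_def)
  moreover have "\<one>\<^bsub>mkM V\<^esub> = V []" by (simp add: mkM_def)
  ultimately show "\<one>\<^bsub>mkM V\<^esub> \<otimes>\<^bsub>mkM V\<^esub> x = x" "x \<otimes>\<^bsub>mkM V\<^esub> \<one>\<^bsub>mkM V\<^esub> = x"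
    using mult_V[OF assms] by (metis append_Nil, metis append_Nil2)
qed

lemma eval_V: assumes "congV V"
  shows "eval_word (mkM V) (\<lambda>y. V (\<sigma> y)) w = V (sub (\<sigma>::nat \<Rightarrow> word) w)"
proof (induction w)
  case Nil then show ?case by (simp add: eval_word_def sub_def mkM_def)
next
  case (Cons a w)
  have "eval_word (mkM V) (\<lambda>y. V (\<sigma> y)) (a # w) = V (\<sigma> a) \<otimes>\<^bsub>mkM V\<^esub> eval_word (mkM V) (\<lambda>y. V (\<sigma> y)) w"
    by (simp add: eval_word_def)
  also have "\<dots> = V (\<sigma> a @ sub \<sigma> w)" using Cons mult_V[OF assms] by simp
  finally show ?case by (simp add: sub_def)
qed

lemma sat_iff: assumes "congV V"
  shows "sat_id (mkM V) (u, v) \<longleftrightarrow> (\<forall>\<sigma>. V (sub \<sigma> u) = V (sub \<sigma> v))"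
proof
  assume s: "sat_id (mkM V) (u, v)"
  show "\<forall>\<sigma>. V (sub \<sigma> u) = V (sub \<sigma> v)"
  proof
    fix \<sigma> :: "nat \<Rightarrow> word"
    have "\<forall>x. V (\<sigma> x) \<in> carrier (mkM V)" by (simp add: mkM_def)
    then show "V (sub \<sigma> u) = V (sub \<sigma> v)" using s eval_V[OF assms] unfolding sat_id_def
      by (metis fst_conv snd_conv)
  qed
next
  assume A: "\<forall>\<sigma>. V (sub \<sigma> u) = V (sub \<sigma> v)"
  show "sat_id (mkM V) (u, v)" unfolding sat_id_def
  proof (intro allI impI)
    fix h :: "nat \<Rightarrow> nat" assume h: "\<forall>x. h x \<in> carrier (mkM V)"
    define \<sigma> where "\<sigma> y = repr V (h y)" for y
    have hV: "h = (\<lambda>y. V (\<sigma> y))"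
    proof
      fix y obtain a where "h y = V a" using h by (auto simp: mkM_def)
      then show "h y = V (\<sigma> y)" using repr_V[of V a] by (simp add: \<sigma>_def)
    qed
    show "eval_word (mkM V) h (fst (u, v)) = eval_word (mkM V) h (snd (u, v))"
      using A eval_V[OF assms] hV by simp
  qed
qed


definition apat :: "nat \<Rightarrow> nat \<Rightarrow> nat list" where
  "apat n j = map (\<lambda>i. if i = j then 1 else 2) [0..<n]"

definition Sset :: "nat \<Rightarrow> (word \<times> word) set \<Rightarrow> nat list \<Rightarrow> nat set" where
  "Sset n \<pi> b = {k. k < n \<and> (\<exists>j<n. b = apat n j \<and> (d_word n j, d_word n k) \<in> \<pi>)}"

definition cls :: "nat \<Rightarrow> (word \<times> word) set \<Rightarrow> nat list \<Rightarrow> nat list + nat list" where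
  "cls n \<pi> b = (if \<exists>j<n. b = apat n j then Inl (sorted_list_of_set (Sset n \<pi> b)) else Inr b)"

definition xof :: "nat \<Rightarrow> word \<Rightarrow> nat" where
  "xof n w = (SOME x. count_list w x = 2*n-1)"

definition F :: "nat \<Rightarrow> (word \<times> word) set \<Rightarrow> word \<Rightarrow> word + (nat \<times> word \<times> bool list \<times> (nat list + nat list))" where
  "F n \<pi> w = (if \<exists>x. count_list w x = 2*n-1 then
      Inr (xof n w, filter (\<lambda>y. y \<noteq> xof n w) w, map (\<lambda>e. e = 0) (runs (xof n w) w),
           cls n \<pi> (filter (\<lambda>e. e \<noteq> 0) (runs (xof n w) w)))
     else Inl w)"

definition V :: "nat \<Rightarrow> (word \<times> word) set \<Rightarrow> word \<Rightarrow> nat" where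
  "V n \<pi> w = to_nat (if inW n w then Some (F n \<pi> w) else None)"

lemma wit:
  assumes "n \<ge> 2" "inW n w" "count_list w x = 2*n-1"
  shows "distinct (filter (\<lambda>y. y \<noteq> x) w)" "\<forall>e\<in>set (runs x w). e < 3"
proof -
  obtain y where y: "count_list w y \<le> 2*n-1" "distinct (filter (\<lambda>z. z \<noteq> y) w)"
     "\<forall>e\<in>set (runs y w). e < 3" using assms(2) unfolding inW_def by blast
  have "count_list w x \<ge> 2" using assms by linarith
  then have "x = y" by (rule twice[OF y(2)])
  then show "distinct (filter (\<lambda>y. y \<noteq> x) w)" "\<forall>e\<in>set (runs x w). e < 3" using y by auto
qed

lemma uniqK:
  assumes "n \<ge> 2" "inW n w" "count_list w x = 2*n-1" "count_list w y = 2*n-1"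
  shows "y = x"
proof -
  have "count_list w y \<ge> 2" using assms by linarith
  then show ?thesis by (rule twice[OF wit(1)[OF assms(1-3)]])
qed

lemma F_Inr:
  assumes "n \<ge> 2" "inW n w" "count_list w x = 2*n-1"
  shows "F n \<pi> w = Inr (x, filter (\<lambda>y. y \<noteq> x) w, map (\<lambda>e. e = 0) (runs x w),
           cls n \<pi> (filter (\<lambda>e. e \<noteq> 0) (runs x w)))"
proof -
  have "count_list w (xof n w) = 2*n-1" unfolding xof_def by (rule someI[of _ x]) (rule assms(3))
  then have "xof n w = x" using uniqK[OF assms] by blast
  then show ?thesis using assms(3) unfolding F_def by auto
qed

lemma F_Inl: "\<not> (\<exists>x. count_list w x = 2*n-1) \<Longrightarrow> F n \<pi> w = Inl w"
  unfolding F_def by auto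

lemma KL_app:
  assumes "n \<ge> 2" "inW n w1" "count_list w1 x = 2*n-1"
  shows "inW n (w1 @ w2) \<longleftrightarrow> x \<notin> set w2 \<and> distinct (filter (\<lambda>y. y \<noteq> x) w1 @ w2)"
proof
  assume A: "inW n (w1 @ w2)"
  obtain y where y: "count_list (w1@w2) y \<le> 2*n-1" "distinct (filter (\<lambda>z. z \<noteq> y) (w1@w2))"
     using A unfolding inW_def by blast
  have "count_list (w1@w2) x \<ge> 2" using assms by simp
  then have xy: "x = y" by (rule twice[OF y(2)])
  then have "count_list w2 x = 0" using y(1) assms(3) by simp
  then have nx: "x \<notin> set w2" by (simp add: count_list_0_iff)
  then have "filter (\<lambda>z. z \<noteq> x) w2 = w2" by (auto intro: filter_True)
  then show "x \<notin> set w2 \<and> distinct (filter (\<lambda>y. y \<noteq> x) w1 @ w2)" using nx y(2) xy by simp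
next
  assume B: "x \<notin> set w2 \<and> distinct (filter (\<lambda>y. y \<noteq> x) w1 @ w2)"
  then have f: "filter (\<lambda>z. z \<noteq> x) w2 = w2" by (auto intro: filter_True)
  have "runs x (w1 @ w2) = runs x w1 @ replicate (length w2) 0" using B runs_app_free by blast
  then have "\<forall>e\<in>set (runs x (w1 @ w2)). e < 3" using wit(2)[OF assms] by auto
  moreover have "count_list (w1@w2) x \<le> 2*n-1" using B assms(3) by simp
  ultimately show "inW n (w1 @ w2)" unfolding inW_def using B f by (intro exI[of _ x]) auto
qed

lemma KL_app2:
  assumes "n \<ge> 2" "inW n w1" "count_list w1 x = 2*n-1"
  shows "inW n (w2 @ w1) \<longleftrightarrow> x \<notin> set w2 \<and> distinct (w2 @ filter (\<lambda>y. y \<noteq> x) w1)"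
proof
  assume A: "inW n (w2 @ w1)"
  obtain y where y: "count_list (w2@w1) y \<le> 2*n-1" "distinct (filter (\<lambda>z. z \<noteq> y) (w2@w1))"
     using A unfolding inW_def by blast
  have "count_list (w2@w1) x \<ge> 2" using assms by simp
  then have xy: "x = y" by (rule twice[OF y(2)])
  then have "count_list w2 x = 0" using y(1) assms(3) by simp
  then have nx: "x \<notin> set w2" by (simp add: count_list_0_iff)
  then have "filter (\<lambda>z. z \<noteq> x) w2 = w2" by (auto intro: filter_True)
  then show "x \<notin> set w2 \<and> distinct (w2 @ filter (\<lambda>y. y \<noteq> x) w1)" using nx y(2) xy by simp
next
  assume B: "x \<notin> set w2 \<and> distinct (w2 @ filter (\<lambda>y. y \<noteq> x) w1)"
  then have f: "filter (\<lambda>z. z \<noteq> x) w2 = w2" by (auto intro: filter_True)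
  have "runs x (w2 @ w1) = replicate (length w2) 0 @ runs x w1" using B runs_free_app by blast
  then have "\<forall>e\<in>set (runs x (w2 @ w1)). e < 3" using wit(2)[OF assms] by auto
  moreover have "count_list (w2@w1) x \<le> 2*n-1" using B assms(3) by simp
  ultimately show "inW n (w2 @ w1)" unfolding inW_def using B f by (intro exI[of _ x]) auto
qed

lemma filter_ne0_rep: "filter (\<lambda>e. e \<noteq> 0) (xs @ replicate m (0::nat)) = filter (\<lambda>e. e \<noteq> 0) xs"
  by (induction m) auto

lemma filter_ne0_rep2: "filter (\<lambda>e. e \<noteq> 0) (replicate m (0::nat) @ xs) = filter (\<lambda>e. e \<noteq> 0) xs"
  by (induction m) auto

lemma Fcong:
  assumes n: "n \<ge> 2" and w: "inW n w1" "inW n w1'" and FF: "F n \<pi> w1 = F n \<pi> w1'"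
  shows "(inW n (w1 @ w2) \<longleftrightarrow> inW n (w1' @ w2)) \<and> (inW n (w1 @ w2) \<longrightarrow> F n \<pi> (w1 @ w2) = F n \<pi> (w1' @ w2))
       \<and> (inW n (w2 @ w1) \<longleftrightarrow> inW n (w2 @ w1')) \<and> (inW n (w2 @ w1) \<longrightarrow> F n \<pi> (w2 @ w1) = F n \<pi> (w2 @ w1'))"
proof (cases "\<exists>x. count_list w1 x = 2*n-1")
  case False
  then have "F n \<pi> w1 = Inl w1" by (rule F_Inl)
  moreover have "\<not> (\<exists>x. count_list w1' x = 2*n-1)"
  proof
    assume "\<exists>x. count_list w1' x = 2*n-1"
    then obtain x where "count_list w1' x = 2*n-1" by blast
    then have "F n \<pi> w1' = Inr (x, filter (\<lambda>y. y \<noteq> x) w1', map (\<lambda>e. e = 0) (runs x w1'),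
           cls n \<pi> (filter (\<lambda>e. e \<noteq> 0) (runs x w1')))" by (rule F_Inr[OF n w(2)])
    then show False using FF \<open>F n \<pi> w1 = Inl w1\<close> by (metis Inl_Inr_False)
  qed
  then have "F n \<pi> w1' = Inl w1'" by (rule F_Inl)
  ultimately have "w1 = w1'" using FF by (metis sum.inject(1))
  then show ?thesis by simp
next
  case True
  then obtain x where x: "count_list w1 x = 2*n-1" by blast
  have F1: "F n \<pi> w1 = Inr (x, filter (\<lambda>y. y \<noteq> x) w1, map (\<lambda>e. e = 0) (runs x w1),
           cls n \<pi> (filter (\<lambda>e. e \<noteq> 0) (runs x w1)))" by (rule F_Inr[OF n w(1) x])
  have "\<exists>x'. count_list w1' x' = 2*n-1"
  proof (rule ccontr)
    assume "\<not> (\<exists>x'. count_list w1' x' = 2*n-1)"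
    then have "F n \<pi> w1' = Inl w1'" by (rule F_Inl)
    then show False using FF F1 by (metis Inl_Inr_False)
  qed
  then obtain x' where x': "count_list w1' x' = 2*n-1" by blast
  have F2: "F n \<pi> w1' = Inr (x', filter (\<lambda>y. y \<noteq> x') w1', map (\<lambda>e. e = 0) (runs x' w1'),
           cls n \<pi> (filter (\<lambda>e. e \<noteq> 0) (runs x' w1')))" by (rule F_Inr[OF n w(2) x'])
  have eqs: "x' = x" "filter (\<lambda>y. y \<noteq> x) w1' = filter (\<lambda>y. y \<noteq> x) w1"
     "map (\<lambda>e. e = 0) (runs x w1') = map (\<lambda>e. e = 0) (runs x w1)"
     "cls n \<pi> (filter (\<lambda>e. e \<noteq> 0) (runs x w1')) = cls n \<pi> (filter (\<lambda>e. e \<noteq> 0) (runs x w1))"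
    using FF F1 F2 by auto
  have x1': "count_list w1' x = 2*n-1" using x' eqs(1) by simp
  have m1: "inW n (w1 @ w2) \<longleftrightarrow> inW n (w1' @ w2)"
    using KL_app[OF n w(1) x] KL_app[OF n w(2) x1'] eqs(2) by simp
  have m2: "inW n (w2 @ w1) \<longleftrightarrow> inW n (w2 @ w1')"
    using KL_app2[OF n w(1) x] KL_app2[OF n w(2) x1'] eqs(2) by simp
  have f1: "F n \<pi> (w1 @ w2) = F n \<pi> (w1' @ w2)" if I: "inW n (w1 @ w2)"
  proof -
    have I': "inW n (w1' @ w2)" using I m1 by simp
    have nx: "x \<notin> set w2" using KL_app[OF n w(1) x] I by simp
    then have fw: "filter (\<lambda>z. z \<noteq> x) w2 = w2" by (auto intro: filter_True)
    have c1: "count_list (w1 @ w2) x = 2*n-1" using x nx by simp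
    have c2: "count_list (w1' @ w2) x = 2*n-1" using x1' nx by simp
    show ?thesis
      unfolding F_Inr[OF n I c1] F_Inr[OF n I' c2] runs_app_free[OF nx] filter_ne0_rep
      using eqs fw by simp
  qed
  have f2: "F n \<pi> (w2 @ w1) = F n \<pi> (w2 @ w1')" if I: "inW n (w2 @ w1)"
  proof -
    have I': "inW n (w2 @ w1')" using I m2 by simp
    have nx: "x \<notin> set w2" using KL_app2[OF n w(1) x] I by simp
    then have fw: "filter (\<lambda>z. z \<noteq> x) w2 = w2" by (auto intro: filter_True)
    have c1: "count_list (w2 @ w1) x = 2*n-1" using x nx by simp
    have c2: "count_list (w2 @ w1') x = 2*n-1" using x1' nx by simp
    show ?thesis
      unfolding F_Inr[OF n I c1] F_Inr[OF n I' c2] runs_free_app[OF nx] filter_ne0_rep2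
      using eqs fw by simp
  qed
  show ?thesis using m1 m2 f1 f2 by blast
qed

lemma congV_V: assumes "n \<ge> 2" shows "congV (V n \<pi>)"
  unfolding congV_def
proof (intro allI impI)
  fix w1 w1' w2 assume E: "V n \<pi> w1 = V n \<pi> w1'"
  show "V n \<pi> (w1 @ w2) = V n \<pi> (w1' @ w2) \<and> V n \<pi> (w2 @ w1) = V n \<pi> (w2 @ w1')"
  proof (cases "inW n w1")
    case True
    then have T': "inW n w1'" using E unfolding V_def by (auto split: if_splits)
    have FF: "F n \<pi> w1 = F n \<pi> w1'" using E True T' unfolding V_def by simp
    show ?thesis using Fcong[OF assms True T' FF, of w2] unfolding V_def by auto
  next
    case False
    then have T': "\<not> inW n w1'" using E unfolding V_def by (auto split: if_splits)
    have "\<not> inW n (w1 @ w2)" "\<not> inW n (w2 @ w1)" "\<not> inW n (w1' @ w2)" "\<not> inW n (w2 @ w1')"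
      using False T' inW_factor by blast+
    then show ?thesis unfolding V_def by simp
  qed
qed


lemma Veq: "(inW n l \<Longrightarrow> l = r) \<Longrightarrow> (inW n r \<Longrightarrow> l = r) \<Longrightarrow> V n \<pi> l = V n \<pi> r"
  unfolding V_def by (cases "inW n l"; cases "inW n r") auto

lemma cnt1: "a \<in> set p \<Longrightarrow> count_list p a \<ge> 1"
proof -
  assume "a \<in> set p"
  then have "count_list p a \<noteq> 0" using count_list_0_iff[of p a] by blast
  then show ?thesis by linarith
qed

lemma commute:
  assumes "inW n w" "\<forall>a\<in>set p. count_list w a \<ge> 2" "\<forall>a\<in>set q. count_list w a \<ge> 2"
  shows "p @ q = q @ p"
proof -
  obtain x where x: "distinct (filter (\<lambda>z. z \<noteq> x) w)" using assms(1) unfolding inW_def by blast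
  have "\<forall>a\<in>set p. a = x" using assms(2) twice[OF x] by blast
  then have p: "p = replicate (length p) x" by (rule all_x_rep)
  have "\<forall>a\<in>set q. a = x" using assms(3) twice[OF x] by blast
  then have q: "q = replicate (length q) x" by (rule all_x_rep)
  have "replicate (length p) x @ replicate (length q) x = replicate (length q) x @ replicate (length p) x"
    by (simp add: replicate_add[symmetric] add.commute)
  then show ?thesis using p q by metis
qed

lemma commute2:
  assumes I: "inW n w" and c: "\<forall>a. count_list w a \<ge> 2 * count_list p a" "\<forall>a. count_list w a \<ge> 2 * count_list q a"
  shows "p @ q = q @ p"
proof (rule commute[OF I])
  show "\<forall>a\<in>set p. 2 \<le> count_list w a" using c(1) cnt1 by (metis le_trans mult_le_mono2 nat_mult_1_right)
  show "\<forall>a\<in>set q. 2 \<le> count_list w a" using c(2) cnt1 by (metis le_trans mult_le_mono2 nat_mult_1_right)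
qed

lemma O1: "V n \<pi> (sub \<sigma> [0,1,2,0,3,1]) = V n \<pi> (sub \<sigma> [1,0,2,0,3,1])"
proof -
  have l: "sub \<sigma> [0,1,2,0,3,1] = \<sigma> 0 @ \<sigma> 1 @ \<sigma> 2 @ \<sigma> 0 @ \<sigma> 3 @ \<sigma> 1" by (simp add: sub_def)
  have r: "sub \<sigma> [1,0,2,0,3,1] = \<sigma> 1 @ \<sigma> 0 @ \<sigma> 2 @ \<sigma> 0 @ \<sigma> 3 @ \<sigma> 1" by (simp add: sub_def)
  show ?thesis unfolding l r
  proof (rule Veq)
    assume I: "inW n (\<sigma> 0 @ \<sigma> 1 @ \<sigma> 2 @ \<sigma> 0 @ \<sigma> 3 @ \<sigma> 1)"
    have "\<sigma> 0 @ \<sigma> 1 = \<sigma> 1 @ \<sigma> 0" by (rule commute2[OF I]) auto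
    then show "\<sigma> 0 @ \<sigma> 1 @ \<sigma> 2 @ \<sigma> 0 @ \<sigma> 3 @ \<sigma> 1 = \<sigma> 1 @ \<sigma> 0 @ \<sigma> 2 @ \<sigma> 0 @ \<sigma> 3 @ \<sigma> 1"
      by (metis append.assoc)
  next
    assume I: "inW n (\<sigma> 1 @ \<sigma> 0 @ \<sigma> 2 @ \<sigma> 0 @ \<sigma> 3 @ \<sigma> 1)"
    have "\<sigma> 0 @ \<sigma> 1 = \<sigma> 1 @ \<sigma> 0" by (rule commute2[OF I]) auto
    then show "\<sigma> 0 @ \<sigma> 1 @ \<sigma> 2 @ \<sigma> 0 @ \<sigma> 3 @ \<sigma> 1 = \<sigma> 1 @ \<sigma> 0 @ \<sigma> 2 @ \<sigma> 0 @ \<sigma> 3 @ \<sigma> 1"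
      by (metis append.assoc)
  qed
qed

lemma O2: "V n \<pi> (sub \<sigma> [0,2,0,1,3,1]) = V n \<pi> (sub \<sigma> [0,2,1,0,3,1])"
proof -
  have l: "sub \<sigma> [0,2,0,1,3,1] = \<sigma> 0 @ \<sigma> 2 @ \<sigma> 0 @ \<sigma> 1 @ \<sigma> 3 @ \<sigma> 1" by (simp add: sub_def)
  have r: "sub \<sigma> [0,2,1,0,3,1] = \<sigma> 0 @ \<sigma> 2 @ \<sigma> 1 @ \<sigma> 0 @ \<sigma> 3 @ \<sigma> 1" by (simp add: sub_def)
  show ?thesis unfolding l r
  proof (rule Veq)
    assume I: "inW n (\<sigma> 0 @ \<sigma> 2 @ \<sigma> 0 @ \<sigma> 1 @ \<sigma> 3 @ \<sigma> 1)"
    have "\<sigma> 0 @ \<sigma> 1 = \<sigma> 1 @ \<sigma> 0" by (rule commute2[OF I]) auto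
    then show "\<sigma> 0 @ \<sigma> 2 @ \<sigma> 0 @ \<sigma> 1 @ \<sigma> 3 @ \<sigma> 1 = \<sigma> 0 @ \<sigma> 2 @ \<sigma> 1 @ \<sigma> 0 @ \<sigma> 3 @ \<sigma> 1"
      by (metis append.assoc)
  next
    assume I: "inW n (\<sigma> 0 @ \<sigma> 2 @ \<sigma> 1 @ \<sigma> 0 @ \<sigma> 3 @ \<sigma> 1)"
    have "\<sigma> 0 @ \<sigma> 1 = \<sigma> 1 @ \<sigma> 0" by (rule commute2[OF I]) auto
    then show "\<sigma> 0 @ \<sigma> 2 @ \<sigma> 0 @ \<sigma> 1 @ \<sigma> 3 @ \<sigma> 1 = \<sigma> 0 @ \<sigma> 2 @ \<sigma> 1 @ \<sigma> 0 @ \<sigma> 3 @ \<sigma> 1"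
      by (metis append.assoc)
  qed
qed

lemma O3: "V n \<pi> (sub \<sigma> [0,2,1,3,0,1]) = V n \<pi> (sub \<sigma> [0,2,1,3,1,0])"
proof -
  have l: "sub \<sigma> [0,2,1,3,0,1] = \<sigma> 0 @ \<sigma> 2 @ \<sigma> 1 @ \<sigma> 3 @ \<sigma> 0 @ \<sigma> 1" by (simp add: sub_def)
  have r: "sub \<sigma> [0,2,1,3,1,0] = \<sigma> 0 @ \<sigma> 2 @ \<sigma> 1 @ \<sigma> 3 @ \<sigma> 1 @ \<sigma> 0" by (simp add: sub_def)
  show ?thesis unfolding l r
  proof (rule Veq)
    assume I: "inW n (\<sigma> 0 @ \<sigma> 2 @ \<sigma> 1 @ \<sigma> 3 @ \<sigma> 0 @ \<sigma> 1)"
    have "\<sigma> 0 @ \<sigma> 1 = \<sigma> 1 @ \<sigma> 0" by (rule commute2[OF I]) auto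
    then show "\<sigma> 0 @ \<sigma> 2 @ \<sigma> 1 @ \<sigma> 3 @ \<sigma> 0 @ \<sigma> 1 = \<sigma> 0 @ \<sigma> 2 @ \<sigma> 1 @ \<sigma> 3 @ \<sigma> 1 @ \<sigma> 0"
      by (metis append.assoc)
  next
    assume I: "inW n (\<sigma> 0 @ \<sigma> 2 @ \<sigma> 1 @ \<sigma> 3 @ \<sigma> 1 @ \<sigma> 0)"
    have "\<sigma> 0 @ \<sigma> 1 = \<sigma> 1 @ \<sigma> 0" by (rule commute2[OF I]) auto
    then show "\<sigma> 0 @ \<sigma> 2 @ \<sigma> 1 @ \<sigma> 3 @ \<sigma> 0 @ \<sigma> 1 = \<sigma> 0 @ \<sigma> 2 @ \<sigma> 1 @ \<sigma> 3 @ \<sigma> 1 @ \<sigma> 0"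
      by (metis append.assoc)
  qed
qed


lemma sub_rep: "sub \<sigma> (replicate m y) = concat (replicate m (\<sigma> y))"
  by (simp add: sub_def map_replicate)

lemma sub_app: "sub \<sigma> (a @ b) = sub \<sigma> a @ sub \<sigma> b"
  by (simp add: sub_def)

lemma concat_rep_nil: "concat (replicate m []) = []"
  by (induction m) auto

lemma C1: "V n \<pi> (sub \<sigma> (replicate 4 0)) = V n \<pi> (sub \<sigma> (replicate 3 0))"
  unfolding sub_rep
proof (rule Veq)
  assume "inW n (concat (replicate 4 (\<sigma> 0)))"
  then have "\<sigma> 0 = []" by (rule cube_empty) simp
  then show "concat (replicate 4 (\<sigma> 0)) = concat (replicate 3 (\<sigma> 0))" by simp
next
  assume "inW n (concat (replicate 3 (\<sigma> 0)))"
  then have "\<sigma> 0 = []" by (rule cube_empty) simp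
  then show "concat (replicate 4 (\<sigma> 0)) = concat (replicate 3 (\<sigma> 0))" by simp
qed

lemma C2: "V n \<pi> (sub \<sigma> (replicate 3 0 @ [1])) = V n \<pi> (sub \<sigma> ([1] @ replicate 3 0))"
  unfolding sub_app sub_rep
proof (rule Veq)
  assume "inW n (concat (replicate 3 (\<sigma> 0)) @ sub \<sigma> [1])"
  then have "inW n (concat (replicate 3 (\<sigma> 0)))" by (rule inW_factor)
  then have "\<sigma> 0 = []" by (rule cube_empty) simp
  then show "concat (replicate 3 (\<sigma> 0)) @ sub \<sigma> [1] = sub \<sigma> [1] @ concat (replicate 3 (\<sigma> 0))" by simp
next
  assume "inW n (sub \<sigma> [1] @ concat (replicate 3 (\<sigma> 0)))"
  then have "inW n (concat (replicate 3 (\<sigma> 0)))" by (rule inW_factor)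
  then have "\<sigma> 0 = []" by (rule cube_empty) simp
  then show "concat (replicate 3 (\<sigma> 0)) @ sub \<sigma> [1] = sub \<sigma> [1] @ concat (replicate 3 (\<sigma> 0))" by simp
qed

lemma sub_pairs: "sub \<sigma> (concat (map (\<lambda>i. [i, 0]) L)) = concat (map (\<lambda>i. \<sigma> i @ \<sigma> 0) L)"
  by (induction L) (auto simp: sub_def)

lemma cnt_pairs: "count_list (concat (map (\<lambda>i. \<tau> i @ p) L)) a \<ge> length L * count_list p a"
  by (induction L) auto

lemma C3:
  assumes n: "n \<ge> 2"
  shows "V n \<pi> (sub \<sigma> (replicate (2*n) 0 @ [1..<2*n+1])) = V n \<pi> (sub \<sigma> (concat (map (\<lambda>i. [i, 0]) [1..<2*n+1])))"
  unfolding sub_app sub_rep sub_pairs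
proof (rule Veq)
  assume "inW n (concat (replicate (2*n) (\<sigma> 0)) @ sub \<sigma> [1..<2*n+1])"
  then have "inW n (concat (replicate (2*n) (\<sigma> 0)))" by (rule inW_factor)
  then have "\<sigma> 0 = []" by (rule cube_empty) (use n in simp)
  then show "concat (replicate (2*n) (\<sigma> 0)) @ sub \<sigma> [1..<2*n+1] = concat (map (\<lambda>i. \<sigma> i @ \<sigma> 0) [1..<2*n+1])"
    by (simp add: concat_rep_nil sub_def)
next
  assume I: "inW n (concat (map (\<lambda>i. \<sigma> i @ \<sigma> 0) [1..<2*n+1]))"
  have "\<sigma> 0 = []"
  proof (rule ccontr)
    assume "\<sigma> 0 \<noteq> []"
    then obtain a where a: "a \<in> set (\<sigma> 0)" by (cases "\<sigma> 0") auto
    obtain x where x: "count_list (concat (map (\<lambda>i. \<sigma> i @ \<sigma> 0) [1..<2*n+1])) x \<le> 2*n-1"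
       "distinct (filter (\<lambda>z. z \<noteq> x) (concat (map (\<lambda>i. \<sigma> i @ \<sigma> 0) [1..<2*n+1])))"
      using I unfolding inW_def by blast
    have c: "count_list (concat (map (\<lambda>i. \<sigma> i @ \<sigma> 0) [1..<2*n+1])) a \<ge> 2*n * count_list (\<sigma> 0) a"
      using cnt_pairs[where \<tau>=\<sigma> and p="\<sigma> 0" and L="[1..<2*n+1]" and a=a] by (simp del: upt_Suc)
    moreover have "2*n * count_list (\<sigma> 0) a \<ge> 2*n * 1" using cnt1[OF a] by (rule mult_le_mono2)
    ultimately have c2: "count_list (concat (map (\<lambda>i. \<sigma> i @ \<sigma> 0) [1..<2*n+1])) a \<ge> 2*n" by linarith
    then have "a = x" using n by (intro twice[OF x(2)]) linarith
    then show False using c2 x(1) n by simp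
  qed
  then show "concat (replicate (2*n) (\<sigma> 0)) @ sub \<sigma> [1..<2*n+1] = concat (map (\<lambda>i. \<sigma> i @ \<sigma> 0) [1..<2*n+1])"
    by (simp add: concat_rep_nil sub_def)
qed


definition aa :: "nat \<Rightarrow> nat \<Rightarrow> nat" where
  "aa j i = (if i = j then 1 else 2)"

lemma apat_aa: "apat n j = map (aa j) [0..<n]"
  by (simp add: apat_def aa_def)

lemma sub_concat: "sub \<sigma> (concat ws) = concat (map (sub \<sigma>) ws)"
  by (induction ws) (auto simp: sub_def)

lemma subd: "sub \<sigma> (d_word n j) =
   concat (map (\<lambda>i. (if i = 0 then [] else \<sigma> i) @ concat (replicate (aa j i) (\<sigma> 0))) [0..<n])"
  unfolding d_word_def sub_concat map_map
  by (rule arg_cong[where f=concat], rule map_cong) (auto simp: sub_def map_replicate aa_def)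

lemma sum_aa: "sum_list (map (aa j) [0..<n]) = (if j < n then 2*n-1 else 2*n)"
  by (induction n) (auto simp: aa_def)

lemma cntE: "count_list (concat (map (\<lambda>i. \<tau> i @ concat (replicate (b i) p)) L)) y =
   sum_list (map (\<lambda>i. count_list (\<tau> i) y) L) + sum_list (map b L) * count_list p y"
  by (induction L) (auto simp: count_concat_rep algebra_simps)

lemma GLruns:
  assumes "\<forall>i\<in>set L. \<tau> i \<noteq> [] \<and> x \<notin> set (\<tau> i)"
  shows "runs x (concat (map (\<lambda>i. \<tau> i @ replicate (b i) x) L)) =
         0 # concat (map (\<lambda>i. replicate (length (\<tau> i) - 1) 0 @ [b i]) L)"
  using assms
proof (induction L)
  case Nil then show ?case by simp
next
  case (Cons i L)
  let ?R = "concat (map (\<lambda>i. \<tau> i @ replicate (b i) x) L)"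
  have IH: "runs x ?R = 0 # concat (map (\<lambda>i. replicate (length (\<tau> i) - 1) 0 @ [b i]) L)"
    using Cons by simp
  have ti: "\<tau> i \<noteq> []" "x \<notin> set (\<tau> i)" using Cons.prems by auto
  have "runs x (concat (map (\<lambda>i. \<tau> i @ replicate (b i) x) (i # L))) = runs x (\<tau> i @ (replicate (b i) x @ ?R))"
    by simp
  also have "\<dots> = replicate (length (\<tau> i)) 0 @ runs x (replicate (b i) x @ ?R)"
    by (rule runs_free_app[OF ti(2)])
  also have "\<dots> = replicate (length (\<tau> i)) 0 @ (b i # tl (runs x ?R))"
    using runs_rep[of x "b i" ?R] IH by simp
  also have "\<dots> = 0 # (replicate (length (\<tau> i) - 1) 0 @ [b i]) @ concat (map (\<lambda>i. replicate (length (\<tau> i) - 1) 0 @ [b i]) L)"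
    using ti(1) IH by (cases "\<tau> i") auto
  finally show ?case by simp
qed

lemma filter_free: "x \<notin> set w \<Longrightarrow> filter (\<lambda>y. y \<noteq> x) w = w"
  by (auto intro: filter_True)

lemma GLfilter:
  assumes "\<forall>i\<in>set L. x \<notin> set (\<tau> i)"
  shows "filter (\<lambda>y. y \<noteq> x) (concat (map (\<lambda>i. \<tau> i @ replicate (b i) x) L)) = concat (map \<tau> L)"
  using assms by (induction L) (auto simp: filter_free)

lemma map_eq0:
  assumes "\<forall>i\<in>set L. b i \<noteq> 0" "b0 \<noteq> 0"
  shows "map (\<lambda>e. e = 0) (b0 # concat (map (\<lambda>i. replicate (c i) 0 @ [b i]) L)) =
         False # concat (map (\<lambda>i. replicate (c i) True @ [False]) L)"
  using assms by (induction L) (auto simp: map_replicate)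

lemma filter_ne0:
  assumes "\<forall>i\<in>set L. b i \<noteq> (0::nat)" "b0 \<noteq> 0"
  shows "filter (\<lambda>e. e \<noteq> 0) (b0 # concat (map (\<lambda>i. replicate (c i) 0 @ [b i]) L)) = b0 # map b L"
  using assms
proof (induction L)
  case (Cons i L)
  have "filter (\<lambda>e. e \<noteq> 0) (replicate (c i) (0::nat)) = []" by (induction "c i") auto
  then show ?case using Cons by auto
qed simp

lemma upt_split3:
  assumes "1 \<le> i" "i < n"
  shows "[0..<n] = [0..<i-1] @ (i-1) # i # [i+1..<n]"
proof -
  have "[0..<n] = [0..<i-1] @ [i-1..<n]" using upt_add_eq_append[of 0 "i-1" "n-(i-1)"] assms by simp
  moreover have "[i-1..<n] = (i-1) # [Suc (i-1)..<n]" using assms by (intro upt_conv_Cons) linarith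
  moreover have "Suc (i-1) = i" using assms by simp
  moreover have "[i..<n] = i # [Suc i..<n]" using assms by (intro upt_conv_Cons) linarith
  ultimately show ?thesis by simp
qed


lemma count_rep_same: "count_list (replicate m x) x = m"
  by (induction m) auto

lemma concat_rep_single: "concat (replicate m [x]) = replicate m x"
  using concat_rep_rep[of m 1 x] by simp

lemma DL:
  fixes \<tau> :: "nat \<Rightarrow> word" and p :: word and n :: nat
  defines "E \<equiv> \<lambda>b. concat (map (\<lambda>i. \<tau> i @ concat (replicate (b i) p)) [0..<n])"
  assumes n: "n \<ge> 2" and j: "j < n" and k: "k < n" and t0: "\<tau> 0 = []" and I: "inW n (E (aa j))"
  shows "inW n (E (aa k)) \<and> (E (aa j) = E (aa k) \<or>
     (\<exists>x T P. F n \<pi> (E (aa j)) = Inr (x, T, P, cls n \<pi> (apat n j)) \<and>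
              F n \<pi> (E (aa k)) = Inr (x, T, P, cls n \<pi> (apat n k))))"
proof (cases "p = []")
  case True
  then have "E (aa j) = E (aa k)" by (simp add: E_def concat_rep_nil)
  then show ?thesis using I by simp
next
  case False
  obtain x where x: "count_list (E (aa j)) x \<le> 2*n-1" "distinct (filter (\<lambda>z. z \<noteq> x) (E (aa j)))"
    using I unfolding inW_def by blast
  have cE: "count_list (E b) y = sum_list (map (\<lambda>i. count_list (\<tau> i) y) [0..<n]) + sum_list (map b [0..<n]) * count_list p y" for b y
    by (simp add: E_def cntE)
  have sj: "sum_list (map (aa j) [0..<n]) = 2*n-1" using sum_aa[of j n] j by simp
  have sk: "sum_list (map (aa k) [0..<n]) = 2*n-1" using sum_aa[of k n] k by simp
  have pa: "\<forall>a\<in>set p. a = x"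
  proof
    fix a assume "a \<in> set p"
    then have "count_list p a \<ge> 1" by (rule cnt1)
    then have "(2*n-1) * count_list p a \<ge> (2*n-1) * 1" by (rule mult_le_mono2)
    moreover have "count_list (E (aa j)) a = sum_list (map (\<lambda>i. count_list (\<tau> i) a) [0..<n]) + (2*n-1) * count_list p a"
      using cE[of "aa j" a] unfolding sj .
    ultimately have "count_list (E (aa j)) a \<ge> 2" using n by linarith
    then show "a = x" by (rule twice[OF x(2)])
  qed
  have p: "p = replicate (length p) x" by (rule all_x_rep[OF pa])
  have cpx: "count_list p x = length p" using count_rep_same[of "length p" x] p by metis
  have cj: "count_list (E (aa j)) x = sum_list (map (\<lambda>i. count_list (\<tau> i) x) [0..<n]) + (2*n-1) * length p"
    using cE[of "aa j" x] unfolding sj cpx .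
  have lp1: "length p = 1"
  proof (rule ccontr)
    assume "length p \<noteq> 1"
    moreover have "length p \<noteq> 0" using False by simp
    ultimately have "length p \<ge> 2" by linarith
    then have "(2*n-1) * length p \<ge> (2*n-1) * 2" by (rule mult_le_mono2)
    then show False using cj x(1) n by linarith
  qed
  then have S0: "sum_list (map (\<lambda>i. count_list (\<tau> i) x) [0..<n]) = 0" using cj x(1) by simp
  then have xfree: "\<forall>i\<in>set [0..<n]. x \<notin> set (\<tau> i)" by (simp add: count_list_0_iff)
  have px: "p = [x]" using p lp1 by simp
  have Eb: "E b = concat (map (\<lambda>i. \<tau> i @ replicate (b i) x) [0..<n])" for b
    by (simp add: E_def px concat_rep_single)
  have ne: "\<forall>i\<in>set [1..<n]. \<tau> i \<noteq> []"
  proof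
    fix i assume "i \<in> set [1..<n]"
    then have i: "1 \<le> i" "i < n" by auto
    show "\<tau> i \<noteq> []"
    proof
      assume e: "\<tau> i = []"
      let ?g = "\<lambda>i. \<tau> i @ replicate (aa j i) x"
      have "E (aa j) = concat (map ?g [0..<i-1]) @ (\<tau> (i-1) @ replicate (aa j (i-1)) x) @ (\<tau> i @ replicate (aa j i) x) @ concat (map ?g [i+1..<n])"
        using Eb[of "aa j"] upt_split3[OF i] by simp
      then have eq: "E (aa j) = (concat (map ?g [0..<i-1]) @ \<tau> (i-1)) @ replicate (aa j (i-1) + aa j i) x @ concat (map ?g [i+1..<n])"
        using e by (simp add: replicate_add)
      have "inW n ((concat (map ?g [0..<i-1]) @ \<tau> (i-1)) @ replicate (aa j (i-1) + aa j i) x @ concat (map ?g [i+1..<n]))"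
        using I unfolding eq .
      then have "inW n (replicate (aa j (i-1) + aa j i) x)" by (rule inW_factor3)
      moreover have "aa j (i-1) + aa j i \<ge> 3" using i by (auto simp: aa_def)
      ultimately show False using not_inW_rep3 by blast
    qed
  qed
  have hyp: "\<forall>i\<in>set [1..<n]. \<tau> i \<noteq> [] \<and> x \<notin> set (\<tau> i)" using ne xfree by auto
  have u0: "[0..<n] = 0 # [1..<n]" using n by (simp add: upt_conv_Cons)
  have Eb2: "E b = replicate (b 0) x @ concat (map (\<lambda>i. \<tau> i @ replicate (b i) x) [1..<n])" for b
    using Eb[of b] u0 t0 by simp
  have runsE: "runs x (E b) = b 0 # concat (map (\<lambda>i. replicate (length (\<tau> i) - 1) 0 @ [b i]) [1..<n])" for b
    unfolding Eb2 runs_rep GLruns[OF hyp] by simp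
  have filtE: "filter (\<lambda>y. y \<noteq> x) (E b) = concat (map \<tau> [1..<n])" for b
    unfolding Eb2 using GLfilter[of "[1..<n]" x \<tau> b] hyp by simp
  have cntx: "count_list (E b) x = sum_list (map b [0..<n])" for b
    using cE[of b x] S0 cpx lp1 by simp
  have aa_nz: "aa k i \<noteq> 0" "aa j i \<noteq> 0" for i by (auto simp: aa_def)
  have ck: "count_list (E (aa k)) x = 2*n-1" using cntx sk by simp
  have cj': "count_list (E (aa j)) x = 2*n-1" using cntx sj by simp
  have Ik: "inW n (E (aa k))" unfolding inW_def
  proof (intro exI[of _ x] conjI)
    show "count_list (E (aa k)) x \<le> 2*n-1" using ck by simp
    show "distinct (filter (\<lambda>y. y \<noteq> x) (E (aa k)))" using x(2) filtE by simp
    show "\<forall>e\<in>set (runs x (E (aa k))). e < 3" unfolding runsE by (auto simp: aa_def)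
  qed
  let ?P = "False # concat (map (\<lambda>i. replicate (length (\<tau> i) - 1) True @ [False]) [1..<n])"
  have Fb: "F n \<pi> (E (aa b)) = Inr (x, concat (map \<tau> [1..<n]), ?P, cls n \<pi> (apat n b))"
    if Ib: "inW n (E (aa b))" and cb: "count_list (E (aa b)) x = 2*n-1" for b
  proof -
    have nz: "\<forall>i\<in>set [1..<n]. aa b i \<noteq> 0" "aa b 0 \<noteq> 0" by (auto simp: aa_def)
    have "apat n b = aa b 0 # map (aa b) [1..<n]" unfolding apat_aa using u0 by simp
    then show ?thesis
      unfolding F_Inr[OF n Ib cb] filtE runsE map_eq0[OF nz] filter_ne0[OF nz] by simp
  qed
  show ?thesis using Ik Fb[OF I cj'] Fb[OF Ik ck] by blast
qed


lemma apat_inj: assumes "j < n" "j' < n" "apat n j = apat n j'" shows "j = j'"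
proof (rule ccontr)
  assume ne: "j \<noteq> j'"
  have a: "apat n j ! j = 1" using assms(1) by (simp add: apat_def)
  have b: "apat n j' ! j = 2" using assms(1) ne by (simp add: apat_def)
  show False using a b assms(3) by simp
qed

lemma Sset_apat: assumes j: "j < n" shows "Sset n \<pi> (apat n j) = {k. k < n \<and> (d_word n j, d_word n k) \<in> \<pi>}"
proof (intro Set.set_eqI iffI)
      fix k
      assume "k \<in> Sset n \<pi> (apat n j)"
      then obtain j' where "k < n" "j' < n" "apat n j = apat n j'" "(d_word n j', d_word n k) \<in> \<pi>"
        unfolding Sset_def by blast
      moreover then have "j' = j" using apat_inj[OF j] by metis
      ultimately show "k \<in> {k. k < n \<and> (d_word n j, d_word n k) \<in> \<pi>}" by simp
    next
      fix k
      assume "k \<in> {k. k < n \<and> (d_word n j, d_word n k) \<in> \<pi>}"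
      then show "k \<in> Sset n \<pi> (apat n j)" unfolding Sset_def using j by blast
qed

lemma cls_eq:
  assumes eq: "equiv (D_set n) \<pi>" and j: "j < n" and k: "k < n" and jk: "(d_word n j, d_word n k) \<in> \<pi>"
  shows "cls n \<pi> (apat n j) = cls n \<pi> (apat n k)"
proof -
  have sy: "sym \<pi>" and tr: "trans \<pi>" using eq by (auto elim: equivE)
  have "{k'. k' < n \<and> (d_word n j, d_word n k') \<in> \<pi>} = {k'. k' < n \<and> (d_word n k, d_word n k') \<in> \<pi>}"
  proof (intro Collect_cong conj_cong refl iffI)
    fix k' assume "(d_word n j, d_word n k') \<in> \<pi>"
    moreover have "(d_word n k, d_word n j) \<in> \<pi>" by (rule symD[OF sy jk])
    ultimately show "(d_word n k, d_word n k') \<in> \<pi>" using tr by (metis transD)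
  next
    fix k' assume "(d_word n k, d_word n k') \<in> \<pi>"
    then show "(d_word n j, d_word n k') \<in> \<pi>" using jk tr by (metis transD)
  qed
  then have "Sset n \<pi> (apat n j) = Sset n \<pi> (apat n k)" using Sset_apat[OF j] Sset_apat[OF k] by simp
  then show ?thesis unfolding cls_def using j k by auto
qed

lemma inD: assumes "equiv (D_set n) \<pi>" "(u, v) \<in> \<pi>"
  shows "\<exists>j<n. \<exists>k<n. u = d_word n j \<and> v = d_word n k"
proof -
  have "\<pi> \<subseteq> D_set n \<times> D_set n" using assms(1) by (auto elim: equivE)
  then show ?thesis using assms(2) unfolding D_set_def by blast
qed

lemma DL2:
  assumes n: "n \<ge> 2" and eq: "equiv (D_set n) \<pi>" and j: "j < n" and k: "k < n"
    and jk: "(d_word n j, d_word n k) \<in> \<pi>" and I: "inW n (sub \<sigma> (d_word n j))"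
  shows "inW n (sub \<sigma> (d_word n k)) \<and> F n \<pi> (sub \<sigma> (d_word n j)) = F n \<pi> (sub \<sigma> (d_word n k))"
proof -
  let ?\<tau> = "\<lambda>i. if i = 0 then [] else \<sigma> i"
  have D: "inW n (concat (map (\<lambda>i. ?\<tau> i @ concat (replicate (aa k i) (\<sigma> 0))) [0..<n])) \<and>
     (concat (map (\<lambda>i. ?\<tau> i @ concat (replicate (aa j i) (\<sigma> 0))) [0..<n]) = concat (map (\<lambda>i. ?\<tau> i @ concat (replicate (aa k i) (\<sigma> 0))) [0..<n]) \<or>
     (\<exists>x T P. F n \<pi> (concat (map (\<lambda>i. ?\<tau> i @ concat (replicate (aa j i) (\<sigma> 0))) [0..<n])) = Inr (x, T, P, cls n \<pi> (apat n j)) \<and>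
              F n \<pi> (concat (map (\<lambda>i. ?\<tau> i @ concat (replicate (aa k i) (\<sigma> 0))) [0..<n])) = Inr (x, T, P, cls n \<pi> (apat n k))))"
    using DL[of n j k ?\<tau> "\<sigma> 0" \<pi>] n j k I unfolding subd by simp
  then show ?thesis unfolding subd using cls_eq[OF eq j k jk] by auto
qed

lemma Did:
  assumes n: "n \<ge> 2" and eq: "equiv (D_set n) \<pi>" and uv: "(u, v) \<in> \<pi>"
  shows "V n \<pi> (sub \<sigma> u) = V n \<pi> (sub \<sigma> v)"
proof -
  obtain j k where j: "j < n" and k: "k < n" and u: "u = d_word n j" and v: "v = d_word n k"
    using inD[OF eq uv] by blast
  have jk: "(d_word n j, d_word n k) \<in> \<pi>" using uv u v by simp
  have kj: "(d_word n k, d_word n j) \<in> \<pi>" using jk eq by (auto elim!: equivE simp: sym_def)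
  show ?thesis
  proof (cases "inW n (sub \<sigma> u)")
    case True
    then show ?thesis using DL2[OF n eq j k jk, of \<sigma>] u v unfolding V_def by simp
  next
    case False
    show ?thesis
    proof (cases "inW n (sub \<sigma> v)")
      case True
      then show ?thesis using DL2[OF n eq k j kj, of \<sigma>] u v unfolding V_def by simp
    next
      case False
      then show ?thesis using \<open>\<not> inW n (sub \<sigma> u)\<close> unfolding V_def by simp
    qed
  qed
qed


lemma in_var:
  assumes n: "n \<ge> 2" and eq: "equiv (D_set n) \<pi>"
  shows "in_variety (C_ids n \<union> Id_of \<pi>) (mkM (V n \<pi>))"
  unfolding in_variety_def
proof (intro conjI ballI)
  have cg: "congV (V n \<pi>)" by (rule congV_V[OF n])
  show "monoid (mkM (V n \<pi>))" by (rule monoid_mkM[OF cg])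
  fix p assume p: "p \<in> C_ids n \<union> Id_of \<pi>"
  obtain l r where lr: "p = (l, r)" by (cases p)
  have "\<forall>\<sigma>. V n \<pi> (sub \<sigma> l) = V n \<pi> (sub \<sigma> r)"
  proof
    fix \<sigma>
    show "V n \<pi> (sub \<sigma> l) = V n \<pi> (sub \<sigma> r)"
      using p lr O1 O2 O3 C1 C2 C3[OF n] Did[OF n eq]
      unfolding C_ids_def O_ids_def Id_of_def by auto
  qed
  then show "sat_id (mkM (V n \<pi>)) p" unfolding lr using sat_iff[OF cg] by blast
qed

lemma sub_id: "(\<forall>y\<in>set w. \<sigma> y = [y]) \<Longrightarrow> sub \<sigma> w = w"
  by (induction w) (auto simp: sub_def)

lemma transfer_W:
  assumes n: "n \<ge> 2" and eq: "equiv (D_set n) \<pi>"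
    and vs: "variety_satisfies (C_ids n \<union> Id_of \<pi>) (u, v)" and Iu: "inW n u"
  shows "inW n v \<and> F n \<pi> v = F n \<pi> u"
proof -
  have cg: "congV (V n \<pi>)" by (rule congV_V[OF n])
  have "sat_id (mkM (V n \<pi>)) (u, v)" using vs in_var[OF n eq] unfolding variety_satisfies_def by blast
  then have A: "\<forall>\<sigma>. V n \<pi> (sub \<sigma> u) = V n \<pi> (sub \<sigma> v)" using sat_iff[OF cg] by blast
  define \<sigma> where "\<sigma> y = (if y \<in> set u then [y] else replicate 3 y)" for y
  have su: "sub \<sigma> u = u" by (rule sub_id) (simp add: \<sigma>_def)
  have VV: "V n \<pi> u = V n \<pi> (sub \<sigma> v)" using A su by metis
  then have I2: "inW n (sub \<sigma> v)" and F2: "F n \<pi> (sub \<sigma> v) = F n \<pi> u"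
    using Iu unfolding V_def by (auto split: if_splits)
  have sv: "sub \<sigma> v = v"
  proof (rule sub_id, rule ballI)
    fix y assume y: "y \<in> set v"
    show "\<sigma> y = [y]"
    proof (cases "y \<in> set u")
      case True then show ?thesis by (simp add: \<sigma>_def)
    next
      case False
      obtain A B where v: "v = A @ y # B" using split_list[OF y] by blast
      have "sub \<sigma> v = sub \<sigma> A @ replicate 3 y @ sub \<sigma> B" using False by (simp add: v sub_def \<sigma>_def)
      then have "inW n (replicate 3 y)" using I2 inW_factor3 by metis
      then show ?thesis using not_inW_rep3[of 3 n y] by simp
    qed
  qed
  show ?thesis using I2 F2 sv by simp
qed

lemma rigid_inW: assumes "limited_cubefree_rigid (2*n-1) u" shows "inW n u"
proof -
  obtain x ts es where h: "distinct (x # ts)" "length es = Suc (length ts)"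
    "u = rigid_form x ts es" "sum_list es \<le> 2*n-1" "\<forall>e\<in>set es. e < 3"
    using assms unfolding limited_cubefree_rigid_def by blast
  have xt: "x \<notin> set ts" using h(1) by simp
  have u: "u = rf x ts es" using h(2,3) rigid_form_rf by simp
  have r: "runs x u = es" using u runs_rf[OF xt h(2)] by simp
  have f: "filter (\<lambda>y. y \<noteq> x) u = ts" using u filter_rf[OF xt] by simp
  have c: "count_list u x = sum_list es" using r runs_sum[of x u] by simp
  show ?thesis unfolding inW_def using h r f c by (intro exI[of _ x]) auto
qed

lemma inW_rigid: assumes "inW n v" shows "limited_cubefree_rigid (2*n-1) v"
proof -
  obtain x where x: "count_list v x \<le> 2*n-1" "distinct (filter (\<lambda>y. y \<noteq> x) v)"
     "\<forall>e\<in>set (runs x v). e < 3" using assms unfolding inW_def by blast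
  have d: "distinct (x # filter (\<lambda>y. y \<noteq> x) v)" using x(2) by simp
  have l: "length (runs x v) = Suc (length (filter (\<lambda>y. y \<noteq> x) v))" by (rule runs_length)
  have e: "v = rigid_form x (filter (\<lambda>y. y \<noteq> x) v) (runs x v)"
    using rigid_form_rf[OF l] rf_runs[of x v] by simp
  show ?thesis unfolding limited_cubefree_rigid_def
    using d l e x(1,3) runs_sum[of x v] by (intro exI[of _ x] exI[of _ "filter (\<lambda>y. y \<noteq> x) v"] exI[of _ "runs x v"]) auto
qed


lemma concat_single: "(\<forall>i\<in>set L. g i = [f i]) \<Longrightarrow> concat (map g L) = map f L"
  by (induction L) auto

lemma dfacts:
  assumes n: "n \<ge> 1" and j: "j < n"
  shows "runs 0 (d_word n j) = apat n j" "filter (\<lambda>y. y \<noteq> 0) (d_word n j) = [1..<n]"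
    "count_list (d_word n j) 0 = sum_list (apat n j)"
proof -
  let ?\<tau> = "\<lambda>i::nat. if i = 0 then [] else [i]"
  have dw: "d_word n j = concat (map (\<lambda>i. ?\<tau> i @ replicate (aa j i) 0) [0..<n])"
    unfolding d_word_def aa_def by simp
  have u0: "[0..<n] = 0 # [1..<n]" using n by (simp add: upt_conv_Cons)
  have d2: "d_word n j = replicate (aa j 0) 0 @ concat (map (\<lambda>i. ?\<tau> i @ replicate (aa j i) 0) [1..<n])"
    using dw u0 by simp
  have hyp: "\<forall>i\<in>set [1..<n]. ?\<tau> i \<noteq> [] \<and> (0::nat) \<notin> set (?\<tau> i)" by auto
  have "runs 0 (d_word n j) = aa j 0 # concat (map (\<lambda>i. replicate (length (?\<tau> i) - 1) 0 @ [aa j i]) [1..<n])"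
    unfolding d2 runs_rep GLruns[OF hyp] by simp
  also have "\<dots> = aa j 0 # map (aa j) [1..<n]"
    by (subst concat_single[of "[1..<n]"]) auto
  also have "\<dots> = apat n j" unfolding apat_aa using u0 by simp
  finally show r: "runs 0 (d_word n j) = apat n j" .
  have "filter (\<lambda>y. y \<noteq> 0) (d_word n j) = concat (map ?\<tau> [1..<n])"
    unfolding d2 using GLfilter[of "[1..<n]" 0 ?\<tau> "aa j"] hyp by simp
  also have "\<dots> = map (\<lambda>i. i) [1..<n]" by (rule concat_single) auto
  finally show "filter (\<lambda>y. y \<noteq> 0) (d_word n j) = [1..<n]" by simp
  show "count_list (d_word n j) 0 = sum_list (apat n j)" using runs_sum[of 0 "d_word n j"] r by simp
qed


lemma filter_nz_map:
  assumes "map (\<lambda>e. e = 0) r = map (\<lambda>e. e = (0::nat)) q" "\<forall>e\<in>set q. e \<noteq> 0"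
  shows "filter (\<lambda>e. e \<noteq> 0) r = r"
  using assms
proof (induction r arbitrary: q)
  case (Cons a r)
  then obtain b q' where q: "q = b # q'" by (cases q) auto
  then show ?case using Cons by auto
qed simp

lemma apat_nz: "\<forall>e\<in>set (apat n j). e \<noteq> 0"
  by (auto simp: apat_def)

lemma sum_apat: "j < n \<Longrightarrow> sum_list (apat n j) = 2*n-1"
  using sum_aa[of j n] by (simp add: apat_aa)

theorem lemma4p3:
  fixes n :: nat and \<pi> :: "(word \<times> word) set" and u v :: word
  assumes "n \<ge> 2"
    and "equiv (D_set n) \<pi>"
    and "variety_satisfies (C_ids n \<union> Id_of \<pi>) (u, v)"
  shows "(limited_cubefree_rigid (2*n - 1) u \<longrightarrow> limited_cubefree_rigid (2*n - 1) v)
       \<and> (u \<in> D_set n \<longrightarrow> v \<in> D_set n \<and> (u, v) \<in> \<pi>)"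
proof (rule conjI; intro impI)
  note n = assms(1) and eq = assms(2) and vs = assms(3)
  assume "limited_cubefree_rigid (2*n - 1) u"
  then have "inW n u" by (rule rigid_inW)
  then have "inW n v" using transfer_W[OF n eq vs] by blast
  then show "limited_cubefree_rigid (2*n - 1) v" by (rule inW_rigid)
next
  note n = assms(1) and eq = assms(2) and vs = assms(3)
  assume "u \<in> D_set n"
  then obtain j where j: "j < n" and u: "u = d_word n j" unfolding D_set_def by blast
  have n1: "n \<ge> 1" using n by simp
  note df = dfacts[OF n1 j]
  have cu: "count_list u 0 = 2*n-1" using df(3) sum_apat[OF j] u by simp
  have Iu: "inW n u" unfolding inW_def
  proof (intro exI[of _ 0] conjI)
    show "count_list u 0 \<le> 2*n-1" using cu by simp
    show "distinct (filter (\<lambda>y. y \<noteq> 0) u)" using df(2) u by simp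
    show "\<forall>e\<in>set (runs 0 u). e < 3" using df(1) u by (auto simp: apat_def)
  qed
  have fa: "filter (\<lambda>e. e \<noteq> 0) (apat n j) = apat n j" using apat_nz by (auto intro: filter_True)
  have Fu: "F n \<pi> u = Inr (0, [1..<n], map (\<lambda>e. e = 0) (apat n j), cls n \<pi> (apat n j))"
    using F_Inr[OF n Iu cu, of \<pi>] df u fa by simp
  have T: "inW n v \<and> F n \<pi> v = F n \<pi> u" by (rule transfer_W[OF n eq vs Iu])
  then have Iv: "inW n v" and FvFu: "F n \<pi> v = F n \<pi> u" by auto
  have "\<exists>x. count_list v x = 2*n-1"
  proof (rule ccontr)
    assume "\<not> (\<exists>x. count_list v x = 2*n-1)"
    then have "F n \<pi> v = Inl v" by (rule F_Inl)
    then show False using FvFu Fu by (metis Inl_Inr_False)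
  qed
  then obtain x where cx: "count_list v x = 2*n-1" by blast
  have Fv: "F n \<pi> v = Inr (x, filter (\<lambda>y. y \<noteq> x) v, map (\<lambda>e. e = 0) (runs x v),
           cls n \<pi> (filter (\<lambda>e. e \<noteq> 0) (runs x v)))" by (rule F_Inr[OF n Iv cx])
  have x0: "x = 0" and fv: "filter (\<lambda>y. y \<noteq> 0) v = [1..<n]"
    and mv: "map (\<lambda>e. e = 0) (runs 0 v) = map (\<lambda>e. e = 0) (apat n j)"
    and cv: "cls n \<pi> (filter (\<lambda>e. e \<noteq> 0) (runs 0 v)) = cls n \<pi> (apat n j)"
    using Fv Fu FvFu by auto
  have nz: "filter (\<lambda>e. e \<noteq> 0) (runs 0 v) = runs 0 v" by (rule filter_nz_map[OF mv apat_nz])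
  have cv2: "cls n \<pi> (runs 0 v) = Inl (sorted_list_of_set (Sset n \<pi> (apat n j)))"
  proof -
    have "cls n \<pi> (apat n j) = Inl (sorted_list_of_set (Sset n \<pi> (apat n j)))"
      unfolding cls_def using j by auto
    then show ?thesis using cv unfolding nz by simp
  qed
  have "\<exists>k<n. runs 0 v = apat n k"
  proof (rule ccontr)
    assume "\<not> (\<exists>k<n. runs 0 v = apat n k)"
    then have "cls n \<pi> (runs 0 v) = Inr (runs 0 v)" unfolding cls_def by simp
    then show False using cv2 by simp
  qed
  then obtain k where k: "k < n" and rk: "runs 0 v = apat n k" by blast
  have "sorted_list_of_set (Sset n \<pi> (apat n k)) = sorted_list_of_set (Sset n \<pi> (apat n j))"
  proof -
    have "cls n \<pi> (apat n k) = Inl (sorted_list_of_set (Sset n \<pi> (apat n k)))"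
      unfolding cls_def using k by auto
    then show ?thesis using cv2 unfolding rk by simp
  qed
  moreover have "finite (Sset n \<pi> (apat n k))" "finite (Sset n \<pi> (apat n j))"
    unfolding Sset_def by auto
  ultimately have SS: "Sset n \<pi> (apat n k) = Sset n \<pi> (apat n j)"
    by (metis sorted_list_of_set.set_sorted_key_list_of_set)
  have dk: "d_word n k \<in> D_set n" using k unfolding D_set_def by blast
  have "(d_word n k, d_word n k) \<in> \<pi>" using eq dk by (auto elim!: equivE dest: refl_onD)
  then have "k \<in> Sset n \<pi> (apat n k)" using Sset_apat[OF k] k by simp
  then have "k \<in> Sset n \<pi> (apat n j)" using SS by simp
  then have jk: "(d_word n j, d_word n k) \<in> \<pi>" using Sset_apat[OF j] by simp
  note dfk = dfacts[OF n1 k]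
  have "v = rf 0 (filter (\<lambda>y. y \<noteq> 0) v) (runs 0 v)" using rf_runs[of 0 v] by simp
  also have "\<dots> = rf 0 (filter (\<lambda>y. y \<noteq> 0) (d_word n k)) (runs 0 (d_word n k))"
    using fv rk dfk by simp
  also have "\<dots> = d_word n k" by (rule rf_runs)
  finally have vk: "v = d_word n k" .
  show "v \<in> D_set n \<and> (u, v) \<in> \<pi>" using vk dk jk u by simp
qed

end
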